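(* Let $N\subset Q^4$ be a null line containing a real point $[p\wedge pj]$. Then $N$ corresponds to a set of two-spheres in $\mathbb{HP}^1$ mutually touching at $p\mathbb{H}$: every non-real point of $N$ is a two-sphere through $p\mathbb{H}$, any two of them touch at $p\mathbb{H}$, and for any two-sphere $\sigma\in N$ the set of two-spheres touching $\sigma$ at $p\mathbb{H}$, together with the point $[p\wedge pj]$, is $N$.
   Context: $\mathbb{H}$ denotes the quaternions, $\mathbb{C}=\mathrm{span}_{\mathbb{R}}\{1,i\}$; $\mathbb{H}^2$ is a right $\mathbb{H}$-vector space identified with $\mathbb{C}^4$; $\mathbb{HP}^1=\{v\mathbb{H}\}\cong S^4$; the twistor fibre over $v\mathbb{H}$ is the line of $\mathbb{CP}^3=\mathbb{P}(\mathbb{C}^4)$ through $[v],[vj]$. $Q^4=\{[\alpha]\in\mathbb{P}(\Lambda^2\mathbb{C}^4):\alpha\wedge\alpha=0\}$, $[v\wedge w]$ identified with the line through $[v],[w]$. The antilinear extension of $v\wedge w\mapsto vj\wedge wj$ gives a real structure $j$ on $Q^4$ whose real points are the twistor fibres $[v\wedge vj]$; every non-real point is the twistor lift $\mathbb{P}\{v:(\sigma)v=vi\}$ of a round two-sphere $\sigma=\{l:(\sigma)l=l\}$ with conformal structure, $(\sigma)\in\mathrm{End}_{\mathbb{H}}(\mathbb{H}^2)$, $(\sigma)^2=-1$. A null line is a projective line contained in $Q^4$. Two two-spheres $\sigma,\sigma'$ through $p\mathbb{H}$ touch at $p\mathbb{H}$ if, for some basis $\{p,e_2\}$ of $\mathbb{H}^2$,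 the matrices of $(\sigma),(\sigma')$ are $\begin{pmatrix}R&H\\0&N\end{pmatrix}$, $\begin{pmatrix}R&H'\\0&N\end{pmatrix}$ with the same $R,N$ (parallel planes with the same conformal structure in the chart with $p\mathbb{H}=\infty$). *)

theory Defs
  imports "HOL-Analysis.Analysis"
begin

text \<open>H^2 (right H-vector space) is identified with C^4 = complex^4: a quaternion
 q = a + j b (a,b complex) corresponds to (a,b), and (q1,q2) in H^2 to (a1,b1,a2,b2).
 Right multiplication by complex scalars is complex scalar multiplication; right
 multiplication by j is the antilinear map Jm below.\<close>

type_synonym c4 = "complex ^ 4"
type_synonym c6 = "complex ^ 6"

text \<open>Quaternions q = fst q + j snd q.\<close>
type_synonym quat = "complex \<times> complex"

definition Jm :: "c4 \<Rightarrow> c4" where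
  "Jm v = (\<chi> k. if k = 1 then - cnj (v$2) else if k = 2 then cnj (v$1)
               else if k = 3 then - cnj (v$4) else cnj (v$3))"

definition rmul :: "c4 \<Rightarrow> quat \<Rightarrow> c4" where
  "rmul v q = fst q *s v + snd q *s Jm v"

definition hline :: "c4 \<Rightarrow> c4 set" where
  "hline v = range (rmul v)"

text \<open>(S) in End_H(H^2) with (S)^2 = -1: a complex 4x4 matrix (C-linear) commuting
 with right multiplication by j.\<close>
definition cstruct :: "complex^4^4 \<Rightarrow> bool" where
  "cstruct S \<longleftrightarrow> (\<forall>v. S *v Jm v = Jm (S *v v)) \<and> S ** S = - mat 1"

text \<open>The round two-sphere sigma = {l : (S) l = l} contains the point pH.\<close>
definition on_sphere :: "complex^4^4 \<Rightarrow> c4 \<Rightarrow> bool" where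
  "on_sphere S p \<longleftrightarrow> (\<lambda>v. S *v v) ` hline p = hline p"

definition hbasis :: "c4 \<Rightarrow> c4 \<Rightarrow> bool" where
  "hbasis p e \<longleftrightarrow> (\<forall>q1 q2. rmul p q1 + rmul e q2 = 0 \<longrightarrow> q1 = 0 \<and> q2 = 0)"

text \<open>Touching at pH: in some basis {p,e2} the matrices are upper triangular
 with the same diagonal entries R, N.\<close>
definition touch :: "complex^4^4 \<Rightarrow> complex^4^4 \<Rightarrow> c4 \<Rightarrow> bool" where
  "touch S S' p \<longleftrightarrow> (\<exists>e2 R H H' N. hbasis p e2 \<and>
      S *v p = rmul p R \<and> S *v e2 = rmul p H + rmul e2 N \<and>
      S' *v p = rmul p R \<and> S' *v e2 = rmul p H' + rmul e2 N)"

text \<open>Lambda^2 C^4 in Pluecker coordinates, index order 12,13,14,23,24,34.\<close>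
definition wedge :: "c4 \<Rightarrow> c4 \<Rightarrow> c6" where
  "wedge v w = (\<chi> k.
     if k = 1 then v$1 * w$2 - v$2 * w$1
     else if k = 2 then v$1 * w$3 - v$3 * w$1
     else if k = 3 then v$1 * w$4 - v$4 * w$1
     else if k = 4 then v$2 * w$3 - v$3 * w$2
     else if k = 5 then v$2 * w$4 - v$4 * w$2
     else v$3 * w$4 - v$4 * w$3)"

text \<open>alpha wedge alpha = 2 * wsq alpha * e1234.\<close>
definition wsq :: "c6 \<Rightarrow> complex" where
  "wsq a = a$1 * a$6 - a$2 * a$5 + a$3 * a$4"

definition pt :: "c6 \<Rightarrow> c6 set" where
  "pt a = range (\<lambda>c. c *s a)"

definition Q4 :: "c6 set set" where
  "Q4 = {pt a | a. a \<noteq> 0 \<and> wsq a = 0}"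

definition projline :: "c6 \<Rightarrow> c6 \<Rightarrow> c6 set set" where
  "projline a b = {pt (s *s a + t *s b) | s t. s \<noteq> 0 \<or> t \<noteq> 0}"

definition null_line :: "c6 set set \<Rightarrow> bool" where
  "null_line N \<longleftrightarrow> (\<exists>a b. (\<forall>s t. s *s a + t *s b = 0 \<longrightarrow> s = 0 \<and> t = 0)
                         \<and> N = projline a b \<and> N \<subseteq> Q4)"

text \<open>Antilinear extension of v wedge w |-> vj wedge wj, and the induced real structure on points.\<close>
definition jL :: "c6 \<Rightarrow> c6" where
  "jL a = (\<chi> k.
     if k = 1 then cnj (a$1)
     else if k = 2 then cnj (a$5)
     else if k = 3 then - cnj (a$4)
     else if k = 4 then - cnj (a$3)
     else if k = 5 then cnj (a$2)
     else cnj (a$6))"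

definition jpt :: "c6 set \<Rightarrow> c6 set" where
  "jpt x = jL ` x"

lemma exhaust_6:
  fixes x :: 6
  shows "x = 1 \<or> x = 2 \<or> x = 3 \<or> x = 4 \<or> x = 5 \<or> x = 6"
proof (induct x)
  case (of_int z)
  then have "z = 0 \<or> z = 1 \<or> z = 2 \<or> z = 3 \<or> z = 4 \<or> z = 5" by fastforce
  then show ?case by auto
qed

lemma forall_6: "(\<forall>i::6. P i) \<longleftrightarrow> P 1 \<and> P 2 \<and> P 3 \<and> P 4 \<and> P 5 \<and> P 6"
  by (metis exhaust_6)

lemma jL_wedge: "jL (wedge v w) = wedge (Jm v) (Jm w)"
  by (simp add: jL_def wedge_def Jm_def vec_eq_iff forall_6 algebra_simps)

definition subspace_pt :: "c4 set \<Rightarrow> c6 set \<Rightarrow> bool" where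
  "subspace_pt W x \<longleftrightarrow> (\<exists>v w. (\<forall>s t. s *s v + t *s w = 0 \<longrightarrow> s = 0 \<and> t = 0)
        \<and> W = {s *s v + t *s w | s t. True} \<and> x = pt (wedge v w))"

definition twlift :: "complex^4^4 \<Rightarrow> c6 set \<Rightarrow> bool" where
  "twlift S x \<longleftrightarrow> subspace_pt {v. S *v v = \<i> *s v} x"

end

theory Submission
  imports Defs
begin


lemma Jm_add[simp]: "Jm (x + y) = Jm x + Jm y"
  by (simp add: Jm_def vec_eq_iff)
lemma Jm_scale[simp]: "Jm (c *s x) = cnj c *s Jm x"
  by (simp add: Jm_def vec_eq_iff)
lemma Jm_Jm[simp]: "Jm (Jm x) = - x"
  by (simp add: Jm_def vec_eq_iff forall_4)
lemma Jm_neg[simp]: "Jm (- x) = - Jm x"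
  by (simp add: Jm_def vec_eq_iff)
lemma Jm_diff[simp]: "Jm (x - y) = Jm x - Jm y"
  by (simp add: Jm_def vec_eq_iff)
lemma Jm_zero[simp]: "Jm 0 = 0"
  by (simp add: Jm_def vec_eq_iff)
lemma Jm_eq0[simp]: "Jm x = 0 \<longleftrightarrow> x = 0"
  by (metis Jm_Jm Jm_zero neg_equal_0_iff_equal)

lemma wedge_add_l[simp]: "wedge (x + y) z = wedge x z + wedge y z"
  by (simp add: wedge_def vec_eq_iff algebra_simps)
lemma wedge_add_r[simp]: "wedge z (x + y) = wedge z x + wedge z y"
  by (simp add: wedge_def vec_eq_iff algebra_simps)
lemma wedge_scale_l[simp]: "wedge (c *s x) z = c *s wedge x z"
  by (simp add: wedge_def vec_eq_iff algebra_simps)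
lemma wedge_scale_r[simp]: "wedge z (c *s x) = c *s wedge z x"
  by (simp add: wedge_def vec_eq_iff algebra_simps)
lemma wedge_neg_l[simp]: "wedge (- x) z = - wedge x z"
  by (simp add: wedge_def vec_eq_iff algebra_simps)
lemma wedge_neg_r[simp]: "wedge z (- x) = - wedge z x"
  by (simp add: wedge_def vec_eq_iff algebra_simps)
lemma wedge_diff_l[simp]: "wedge (x - y) z = wedge x z - wedge y z"
  by (simp add: wedge_def vec_eq_iff algebra_simps)
lemma wedge_diff_r[simp]: "wedge z (x - y) = wedge z x - wedge z y"
  by (simp add: wedge_def vec_eq_iff algebra_simps)
lemma wedge_self[simp]: "wedge x x = 0"
  by (simp add: wedge_def vec_eq_iff algebra_simps)
lemma wedge_swap: "wedge y x = - wedge x y"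
  by (simp add: wedge_def vec_eq_iff algebra_simps)
lemma wedge_zero[simp]: "wedge 0 x = 0" "wedge x 0 = 0"
  by (simp_all add: wedge_def vec_eq_iff)

definition Bf :: "c6 \<Rightarrow> c6 \<Rightarrow> complex" where
  "Bf a b = a$1*b$6 + a$6*b$1 - a$2*b$5 - a$5*b$2 + a$3*b$4 + a$4*b$3"

lemma Bf_add_l[simp]: "Bf (x + y) z = Bf x z + Bf y z"
  by (simp add: Bf_def algebra_simps)
lemma Bf_add_r[simp]: "Bf z (x + y) = Bf z x + Bf z y"
  by (simp add: Bf_def algebra_simps)
lemma Bf_scale_l[simp]: "Bf (c *s x) z = c * Bf x z"
  by (simp add: Bf_def algebra_simps)
lemma Bf_scale_r[simp]: "Bf z (c *s x) = c * Bf z x"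
  by (simp add: Bf_def algebra_simps)
lemma Bf_neg_l[simp]: "Bf (- x) z = - Bf x z"
  by (simp add: Bf_def algebra_simps)
lemma Bf_neg_r[simp]: "Bf z (- x) = - Bf z x"
  by (simp add: Bf_def algebra_simps)
lemma Bf_diff_l[simp]: "Bf (x - y) z = Bf x z - Bf y z"
  by (simp add: Bf_def algebra_simps)
lemma Bf_diff_r[simp]: "Bf z (x - y) = Bf z x - Bf z y"
  by (simp add: Bf_def algebra_simps)
lemma Bf_zero[simp]: "Bf 0 x = 0" "Bf x 0 = 0"
  by (simp_all add: Bf_def)
lemma Bf_sym: "Bf a b = Bf b a"
  by (simp add: Bf_def algebra_simps)
lemma wsq_add: "wsq (a + b) = wsq a + wsq b + Bf a b"
  by (simp add: wsq_def Bf_def algebra_simps)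
lemma wsq_scale: "wsq (c *s a) = c^2 * wsq a"
  by (simp add: wsq_def power2_eq_square algebra_simps)

lemma Bf_ww1[simp]: "Bf (wedge x y) (wedge x z) = 0"
  by (simp add: Bf_def wedge_def algebra_simps)
lemma Bf_ww2[simp]: "Bf (wedge x y) (wedge z x) = 0"
  by (simp add: Bf_def wedge_def algebra_simps)
lemma Bf_ww3[simp]: "Bf (wedge x y) (wedge y z) = 0"
  by (simp add: Bf_def wedge_def algebra_simps)
lemma Bf_ww4[simp]: "Bf (wedge x y) (wedge z y) = 0"
  by (simp add: Bf_def wedge_def algebra_simps)
lemma Bf_swap_r: "Bf a (wedge y x) = - Bf a (wedge x y)"
  by (subst wedge_swap) simp

definition ind2 :: "'a::field^'n \<Rightarrow> 'a^'n \<Rightarrow> bool" where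
  "ind2 x y \<longleftrightarrow> (\<forall>s t. s *s x + t *s y = 0 \<longrightarrow> s = 0 \<and> t = 0)"
definition ind4 :: "c4 \<Rightarrow> c4 \<Rightarrow> c4 \<Rightarrow> c4 \<Rightarrow> bool" where
  "ind4 x1 x2 x3 x4 \<longleftrightarrow> (\<forall>a b c d. a *s x1 + b *s x2 + c *s x3 + d *s x4 = 0 \<longrightarrow> a = 0 \<and> b = 0 \<and> c = 0 \<and> d = 0)"

lemma wedge0_dep: "wedge v w = 0 \<Longrightarrow> (w$k) *s v - (v$k) *s w = 0"
  apply (simp add: wedge_def vec_eq_iff forall_6 forall_4)
  using exhaust_4[of k] by (auto simp: algebra_simps)

lemma ind2_wedge: "ind2 v w \<Longrightarrow> wedge v w \<noteq> 0"
proof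
  assume i: "ind2 v w" and w: "wedge v w = 0"
  have "\<forall>k. v$k = 0"
  proof
    fix k
    have "(w$k) *s v + (-(v$k)) *s w = 0" using wedge0_dep[OF w, of k]
      by (simp add: vector_smult_lneg)
    then have "w$k = 0 \<and> -(v$k) = 0" using i unfolding ind2_def by blast
    then show "v$k = 0" by simp
  qed
  then have "v = 0" by (simp add: vec_eq_iff)
  then have "1 *s v + 0 *s w = 0" by simp
  then show False using i unfolding ind2_def by force
qed

lemma wedge_ind2: "wedge v w \<noteq> 0 \<Longrightarrow> ind2 v w"
  unfolding ind2_def
proof (intro allI impI)
  fix s t assume w: "wedge v w \<noteq> 0" and e: "s *s v + t *s w = 0"
  show "s = 0 \<and> t = 0"
  proof (rule ccontr)
    assume "\<not> (s = 0 \<and> t = 0)"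
    have "wedge (s *s v + t *s w) w = s *s wedge v w"
      and "wedge v (s *s v + t *s w) = t *s wedge v w" by simp_all
    then have "s *s wedge v w = 0" "t *s wedge v w = 0" using e by simp_all
    then show False using w \<open>\<not> (s = 0 \<and> t = 0)\<close>
      by (metis vector_mul_eq_0)
  qed
qed



definition cols4 :: "c4 \<Rightarrow> c4 \<Rightarrow> c4 \<Rightarrow> c4 \<Rightarrow> complex^4^4" where
  "cols4 x1 x2 x3 x4 = (\<chi> i j. if j = 1 then x1$i else if j = 2 then x2$i else if j = 3 then x3$i else x4$i)"

lemma cols4_mult: "cols4 x1 x2 x3 x4 *v c = c$1 *s x1 + c$2 *s x2 + c$3 *s x3 + c$4 *s x4"
  by (simp add: cols4_def matrix_vector_mult_def vec_eq_iff sum_4 mult.commute)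

lemma ind4_inv:
  assumes "ind4 x1 x2 x3 x4"
  obtains B where "B ** cols4 x1 x2 x3 x4 = mat 1" "cols4 x1 x2 x3 x4 ** B = mat 1"
proof -
  have "c = 0" if "cols4 x1 x2 x3 x4 *v c = 0" for c
  proof -
    have "c$1 = 0 \<and> c$2 = 0 \<and> c$3 = 0 \<and> c$4 = 0"
      using assms that unfolding ind4_def cols4_mult by blast
    then show ?thesis unfolding vec_eq_iff forall_4 by simp
  qed
  then obtain B where B: "B ** cols4 x1 x2 x3 x4 = mat 1"
    using matrix_left_invertible_ker by blast
  then have "cols4 x1 x2 x3 x4 ** B = mat 1" by (simp add: matrix_left_right_inverse)
  then show ?thesis using that B by blast
qed

lemma span4:
  assumes "ind4 x1 x2 x3 x4"
  shows "\<exists>a b c d. y = a *s x1 + b *s x2 + c *s x3 + d *s x4"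
proof -
  obtain B where "cols4 x1 x2 x3 x4 ** B = mat 1" using ind4_inv[OF assms] by blast
  then have "y = cols4 x1 x2 x3 x4 *v (B *v y)"
    by (metis matrix_vector_mul_assoc matrix_vector_mul_lid)
  then show ?thesis unfolding cols4_mult by blast
qed

lemma ind4_ind2: "ind4 x1 x2 x3 x4 \<Longrightarrow> ind2 x1 x2"
  unfolding ind2_def
proof (intro allI impI)
  fix s t assume i: "ind4 x1 x2 x3 x4" and e: "s *s x1 + t *s x2 = 0"
  then have "s *s x1 + t *s x2 + 0 *s x3 + 0 *s x4 = 0" by simp
  then show "s = 0 \<and> t = 0" using i unfolding ind4_def by blast
qed

lemma Bf_expand:
  "Bf (wedge v1 v2) (wedge (a1*s v1 + a2*s v2 + a3*s v3 + a4*s v4) (b1*s v1 + b2*s v2 + b3*s v3 + b4*s v4))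
    = (a3*b4 - a4*b3) * Bf (wedge v1 v2) (wedge v3 v4)"
  by (simp add: Bf_swap_r[of _ v4 v3] algebra_simps)

lemma Bf_axis:
  "Bf a (wedge (axis 1 1) (axis 2 1)) = a$6"
  "Bf a (wedge (axis 1 1) (axis 3 1)) = - a$5"
  "Bf a (wedge (axis 1 1) (axis 4 1)) = a$4"
  "Bf a (wedge (axis 2 1) (axis 3 1)) = a$3"
  "Bf a (wedge (axis 2 1) (axis 4 1)) = - a$2"
  "Bf a (wedge (axis 3 1) (axis 4 1)) = a$1"
  by (simp_all add: Bf_def wedge_def axis_def)

lemma Bf_nondeg: "(\<And>y z. Bf a (wedge y z) = 0) \<Longrightarrow> a = 0"
  using Bf_axis[of a] by (simp add: vec_eq_iff forall_6)

lemma G: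
  assumes "ind4 v1 v2 v3 v4"
  shows "Bf (wedge v1 v2) (wedge v3 v4) \<noteq> 0"
proof
  assume h: "Bf (wedge v1 v2) (wedge v3 v4) = 0"
  have "Bf (wedge v1 v2) (wedge y z) = 0" for y z
  proof -
    obtain a1 a2 a3 a4 where y: "y = a1*s v1 + a2*s v2 + a3*s v3 + a4*s v4" using span4[OF assms] by blast
    obtain b1 b2 b3 b4 where z: "z = b1*s v1 + b2*s v2 + b3*s v3 + b4*s v4" using span4[OF assms] by blast
    show ?thesis unfolding y z Bf_expand h by simp
  qed
  then have "wedge v1 v2 = 0" by (rule Bf_nondeg)
  then show False using ind2_wedge[OF ind4_ind2[OF assms]] by simp
qed

definition cl1 :: "c6 \<Rightarrow> c4" where "cl1 c = (\<chi> i. if i = 1 then 0 else if i = 2 then - c$1 else if i = 3 then - c$2 else - c$3)"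
definition cl2 :: "c6 \<Rightarrow> c4" where "cl2 c = (\<chi> i. if i = 1 then c$1 else if i = 2 then 0 else if i = 3 then - c$4 else - c$5)"
definition cl3 :: "c6 \<Rightarrow> c4" where "cl3 c = (\<chi> i. if i = 1 then c$2 else if i = 2 then c$4 else if i = 3 then 0 else - c$6)"
definition cl4 :: "c6 \<Rightarrow> c4" where "cl4 c = (\<chi> i. if i = 1 then c$3 else if i = 2 then c$5 else if i = 3 then c$6 else 0)"

lemma colv_wedge1: "wsq c = 0 \<Longrightarrow> wedge (cl1 c) (cl2 c) = c$1 *s c"
  unfolding vec_eq_iff forall_6
  apply (simp add: cl1_def cl2_def cl3_def cl4_def wedge_def)
  unfolding wsq_def by algebra

lemma colv_wedge2: "wsq c = 0 \<Longrightarrow> wedge (cl1 c) (cl3 c) = c$2 *s c"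
  unfolding vec_eq_iff forall_6
  apply (simp add: cl1_def cl2_def cl3_def cl4_def wedge_def)
  unfolding wsq_def by algebra

lemma colv_wedge3: "wsq c = 0 \<Longrightarrow> wedge (cl1 c) (cl4 c) = c$3 *s c"
  unfolding vec_eq_iff forall_6
  apply (simp add: cl1_def cl2_def cl3_def cl4_def wedge_def)
  unfolding wsq_def by algebra

lemma colv_wedge4: "wsq c = 0 \<Longrightarrow> wedge (cl2 c) (cl3 c) = c$4 *s c"
  unfolding vec_eq_iff forall_6
  apply (simp add: cl1_def cl2_def cl3_def cl4_def wedge_def)
  unfolding wsq_def by algebra

lemma colv_wedge5: "wsq c = 0 \<Longrightarrow> wedge (cl2 c) (cl4 c) = c$5 *s c"
  unfolding vec_eq_iff forall_6
  apply (simp add: cl1_def cl2_def cl3_def cl4_def wedge_def)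
  unfolding wsq_def by algebra

lemma colv_wedge6: "wsq c = 0 \<Longrightarrow> wedge (cl3 c) (cl4 c) = c$6 *s c"
  unfolding vec_eq_iff forall_6
  apply (simp add: cl1_def cl2_def cl3_def cl4_def wedge_def)
  unfolding wsq_def by algebra

lemma decomp:
  assumes "c \<noteq> 0" "wsq c = 0"
  shows "\<exists>v w. wedge v w = c"
proof -
  obtain k where k: "c$k \<noteq> 0" using assms(1) by (auto simp: vec_eq_iff)
  have e: "wedge ((1 / c$k) *s v) w = c" if "wedge v w = c$k *s c" for v w
    using that k by (simp add: vector_smult_assoc)
  note cw = colv_wedge1[OF assms(2)] colv_wedge2[OF assms(2)] colv_wedge3[OF assms(2)] colv_wedge4[OF assms(2)] colv_wedge5[OF assms(2)] colv_wedge6[OF assms(2)]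
  from exhaust_6[of k] show ?thesis
  proof (elim disjE)
    assume "k = 1" then have "wedge (cl1 c) (cl2 c) = c$k *s c" using cw(1) by simp
    then show ?thesis using e by blast
  next
    assume "k = 2" then have "wedge (cl1 c) (cl3 c) = c$k *s c" using cw(2) by simp
    then show ?thesis using e by blast
  next
    assume "k = 3" then have "wedge (cl1 c) (cl4 c) = c$k *s c" using cw(3) by simp
    then show ?thesis using e by blast
  next
    assume "k = 4" then have "wedge (cl2 c) (cl3 c) = c$k *s c" using cw(4) by simp
    then show ?thesis using e by blast
  next
    assume "k = 5" then have "wedge (cl2 c) (cl4 c) = c$k *s c" using cw(5) by simp
    then show ?thesis using e by blast
  next
    assume "k = 6" then have "wedge (cl3 c) (cl4 c) = c$k *s c" using cw(6) by simp
    then show ?thesis using e by blast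
  qed
qed

lemma normsq0: "cnj s * s + t * cnj t = 0 \<Longrightarrow> s = 0 \<and> t = 0"
proof -
  assume h: "cnj s * s + t * cnj t = 0"
  have "Re (cnj s * s + t * cnj t) = 0" using h by simp
  then have e: "((Re s)^2 + (Im s)^2) + ((Re t)^2 + (Im t)^2) = 0" by (simp add: power2_eq_square)
  have "(Re s)^2 + (Im s)^2 \<ge> 0" "(Re t)^2 + (Im t)^2 \<ge> 0" by simp_all
  then have "(Re s)^2 + (Im s)^2 = 0" "(Re t)^2 + (Im t)^2 = 0" using e by linarith+
  then show ?thesis by (simp add: sum_power2_eq_zero_iff complex_eq_iff)
qed

lemma ind2_J:
  assumes "x \<noteq> 0"
  shows "ind2 x (Jm x)"
  unfolding ind2_def
proof (intro allI impI)
  fix s t assume e: "s *s x + t *s Jm x = 0"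
  have "Jm (s *s x + t *s Jm x) = 0" using e by simp
  then have "cnj s *s Jm x + cnj t *s (- x) = 0" by simp
  then have e2: "cnj s *s Jm x - cnj t *s x = 0" by (simp add: vec_eq_iff algebra_simps)
  have "(cnj s) *s (s *s x + t *s Jm x) - t *s (cnj s *s Jm x - cnj t *s x) = (cnj s * s + t * cnj t) *s x"
    by (simp add: vec_eq_iff algebra_simps)
  then have "(cnj s * s + t * cnj t) *s x = 0" using e e2 by simp
  then have "cnj s * s + t * cnj t = 0" using assms by (metis vector_mul_eq_0)
  then show "s = 0 \<and> t = 0" by (rule normsq0)
qed

definition Pv :: "c4 \<Rightarrow> c4 set" where "Pv x = {a *s x + b *s Jm x | a b. True}"

lemma hline_Pv: "hline x = Pv x"
  unfolding hline_def Pv_def rmul_def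
proof (intro set_eqI iffI)
  fix y assume "y \<in> range (\<lambda>q. fst q *s x + snd q *s Jm x)"
  then show "y \<in> {a *s x + b *s Jm x |a b. True}" by auto
next
  fix y assume "y \<in> {a *s x + b *s Jm x |a b. True}"
  then obtain a b where "y = a *s x + b *s Jm x" by auto
  then have "y = (\<lambda>q. fst q *s x + snd q *s Jm x) (a, b)" by simp
  then show "y \<in> range (\<lambda>q. fst q *s x + snd q *s Jm x)" by blast
qed

lemma Pv_add: "u \<in> Pv x \<Longrightarrow> w \<in> Pv x \<Longrightarrow> u + w \<in> Pv x"
  unfolding Pv_def by clarify (rule_tac x="a+aa" in exI, rule_tac x="b+ba" in exI, simp add: vec_eq_iff algebra_simps)
lemma Pv_scale: "u \<in> Pv x \<Longrightarrow> c *s u \<in> Pv x"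
  unfolding Pv_def by clarify (rule_tac x="c*a" in exI, rule_tac x="c*b" in exI, simp add: vec_eq_iff algebra_simps)
lemma Pv_J: "u \<in> Pv x \<Longrightarrow> Jm u \<in> Pv x"
  unfolding Pv_def by clarify (rule_tac x="- cnj b" in exI, rule_tac x="cnj a" in exI, simp add: vec_eq_iff algebra_simps)
lemma Pv_gen: "x \<in> Pv x" "Jm x \<in> Pv x" "a *s x + b *s Jm x \<in> Pv x"
proof -
  have "x = 1 *s x + 0 *s Jm x" "Jm x = 0 *s x + 1 *s Jm x" by simp_all
  then show "x \<in> Pv x" "Jm x \<in> Pv x" unfolding Pv_def by blast+
  show "a *s x + b *s Jm x \<in> Pv x" unfolding Pv_def by blast
qed

lemma ind4_J:
  assumes "x \<noteq> 0" "m \<notin> Pv x"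
  shows "ind4 x (Jm x) m (Jm m)"
  unfolding ind4_def
proof (intro allI impI)
  fix a b c d assume e: "a *s x + b *s Jm x + c *s m + d *s Jm m = 0"
  have cd: "c = 0 \<and> d = 0"
  proof (rule ccontr)
    assume ncd: "\<not> (c = 0 \<and> d = 0)"
    have u: "c *s m + d *s Jm m = (-a) *s x + (-b) *s Jm x"
      using e by (simp add: vec_eq_iff algebra_simps) (metis add_eq_0_iff2 add.assoc add.commute)
    have "c *s m + d *s Jm m \<in> Pv x" unfolding u by (rule Pv_gen)
    then have u1: "c *s m + d *s Jm m \<in> Pv x" .
    have "Jm (c *s m + d *s Jm m) \<in> Pv x" using Pv_J[OF u1] .
    then have u2: "cnj c *s Jm m - cnj d *s m \<in> Pv x" by (simp add: algebra_simps vector_smult_lneg)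
    have "cnj c *s (c *s m + d *s Jm m) - d *s (cnj c *s Jm m - cnj d *s m) = (cnj c * c + d * cnj d) *s m"
      by (simp add: vec_eq_iff algebra_simps)
    moreover have "cnj c *s (c *s m + d *s Jm m) + (-d) *s (cnj c *s Jm m - cnj d *s m) \<in> Pv x"
      by (rule Pv_add[OF Pv_scale[OF u1] Pv_scale[OF u2]])
    moreover have "cnj c *s (c *s m + d *s Jm m) + (-d) *s (cnj c *s Jm m - cnj d *s m) =
        cnj c *s (c *s m + d *s Jm m) - d *s (cnj c *s Jm m - cnj d *s m)"
      by (simp add: vec_eq_iff algebra_simps)
    ultimately have mm: "(cnj c * c + d * cnj d) *s m \<in> Pv x" by metis
    have "cnj c * c + d * cnj d \<noteq> 0"
    proof
      assume "cnj c * c + d * cnj d = 0"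
      then show False using ncd normsq0 by blast
    qed
    then have kk: "(1 / (cnj c * c + d * cnj d)) * (cnj c * c + d * cnj d) = 1" by simp
    have "(1 / (cnj c * c + d * cnj d)) *s ((cnj c * c + d * cnj d) *s m) \<in> Pv x"
      using Pv_scale[OF mm] by blast
    then have "m \<in> Pv x" by (simp only: vector_smult_assoc kk vector_smult_lid)
    then show False using assms by simp
  qed
  then have "a *s x + b *s Jm x = 0" using e by simp
  then show "a = 0 \<and> b = 0 \<and> c = 0 \<and> d = 0" using cd ind2_J[OF assms(1)] unfolding ind2_def by blast
qed

lemma pt_mem: "x \<in> pt x"
  unfolding pt_def by (metis rangeI vector_smult_lid)
lemma pt_eqD: "pt x = pt y \<Longrightarrow> \<exists>k. x = k *s y"
  using pt_mem[of x] unfolding pt_def by auto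
lemma pt_scale: "k \<noteq> 0 \<Longrightarrow> pt (k *s x) = pt x"
  unfolding pt_def
  apply (auto simp: vector_smult_assoc image_def)
  apply (rule_tac x="xa / k" in exI, simp add: vector_smult_assoc)
  done



lemma mv_add[simp]: "(S::complex^4^4) *v (x + y) = S *v x + S *v y"
  by (rule matrix_vector_right_distrib)
lemma mv_scale[simp]: "(S::complex^4^4) *v (c *s x) = c *s (S *v x)"
  by (rule vector_scalar_commute)
lemma mv_neg[simp]: "(S::complex^4^4) *v (- x) = - (S *v x)"
  by (simp add: matrix_vector_mult_def vec_eq_iff sum_negf)
lemma mv_diff[simp]: "(S::complex^4^4) *v (x - y) = S *v x - S *v y"
  by (rule matrix_vector_mult_diff_distrib)
lemma negmat_mv: "(- (M::complex^4^4)) *v v = - (M *v v)"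
  by (simp add: matrix_vector_mult_def vec_eq_iff sum_negf)

lemma cs_J: "cstruct S \<Longrightarrow> S *v Jm v = Jm (S *v v)"
  unfolding cstruct_def by blast
lemma cs_SS: "cstruct S \<Longrightarrow> S *v (S *v v) = - v"
  unfolding cstruct_def by (simp add: matrix_vector_mul_assoc negmat_mv)

lemma eig_J: "cstruct S \<Longrightarrow> S *v v = \<i> *s v \<Longrightarrow> S *v Jm v = (- \<i>) *s Jm v"
  by (simp add: cs_J)

lemma ind4_eig:
  assumes S: "cstruct S" and i: "ind2 v0 w0" and e1: "S *v v0 = \<i> *s v0" and e2: "S *v w0 = \<i> *s w0"
  shows "ind4 v0 w0 (Jm v0) (Jm w0)"
  unfolding ind4_def
proof (intro allI impI)
  fix a b c d assume z: "a *s v0 + b *s w0 + c *s Jm v0 + d *s Jm w0 = 0"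
  have "S *v (a *s v0 + b *s w0 + c *s Jm v0 + d *s Jm w0) = 0" using z by simp
  then have z2: "\<i> *s (a *s v0 + b *s w0) - \<i> *s (c *s Jm v0 + d *s Jm w0) = 0"
    using eig_J[OF S e1] eig_J[OF S e2] e1 e2 by (simp add: vec_eq_iff algebra_simps)
  have "(2*\<i>) *s (a *s v0 + b *s w0) = \<i> *s (a *s v0 + b *s w0 + c *s Jm v0 + d *s Jm w0)
      + (\<i> *s (a *s v0 + b *s w0) - \<i> *s (c *s Jm v0 + d *s Jm w0))"
    by (simp add: vec_eq_iff algebra_simps)
  then have "(2*\<i>) *s (a *s v0 + b *s w0) = 0" using z z2 by simp
  moreover have "2*\<i> \<noteq> (0::complex)" by simp
  ultimately have e: "a *s v0 + b *s w0 = 0" using vector_mul_eq_0 by blast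
  then have ab: "a = 0 \<and> b = 0" using i unfolding ind2_def by blast
  have "Jm (cnj c *s v0 + cnj d *s w0) = c *s Jm v0 + d *s Jm w0" by simp
  also have "\<dots> = 0" using z ab by simp
  finally have "Jm (cnj c *s v0 + cnj d *s w0) = 0" .
  then have "cnj c *s v0 + cnj d *s w0 = 0" by (simp only: Jm_eq0)
  then have "cnj c = 0 \<and> cnj d = 0" using i unfolding ind2_def by blast
  then show "a = 0 \<and> b = 0 \<and> c = 0 \<and> d = 0" using ab by simp
qed

lemma key_eig:
  assumes S: "cstruct S" and tw: "twlift S x" and x: "x = pt (wedge q u)" and qu: "ind2 q u"
  shows "S *v q = \<i> *s q \<and> S *v u = \<i> *s u"
proof -
  obtain v0 w0 where i: "ind2 v0 w0" and E: "{v. S *v v = \<i> *s v} = {s *s v0 + t *s w0 | s t. True}"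
      and xx: "x = pt (wedge v0 w0)"
    using tw unfolding twlift_def subspace_pt_def ind2_def by blast
  have mem: "S *v y = \<i> *s y \<longleftrightarrow> (\<exists>s t. y = s *s v0 + t *s w0)" for y
    using E by blast
  have e1: "S *v v0 = \<i> *s v0" using mem[of v0] by (metis add.right_neutral vector_smult_lid vector_smult_lzero)
  have e2: "S *v w0 = \<i> *s w0" using mem[of w0] by (metis add.left_neutral vector_smult_lid vector_smult_lzero)
  have i4: "ind4 v0 w0 (Jm v0) (Jm w0)" by (rule ind4_eig[OF S i e1 e2])
  have D: "Bf (wedge v0 w0) (wedge (Jm v0) (Jm w0)) \<noteq> 0" by (rule G[OF i4])
  have crit: "S *v y = \<i> *s y" if h: "\<And>z. Bf (wedge v0 w0) (wedge y z) = 0" for y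
  proof -
    obtain a b c d where y: "y = a *s v0 + b *s w0 + c *s Jm v0 + d *s Jm w0" using span4[OF i4] by blast
    have "Bf (wedge v0 w0) (wedge y (Jm w0)) = c * Bf (wedge v0 w0) (wedge (Jm v0) (Jm w0))"
      unfolding y by simp
    then have c: "c = 0" using h D by simp
    have "Bf (wedge v0 w0) (wedge y (Jm v0)) = - d * Bf (wedge v0 w0) (wedge (Jm v0) (Jm w0))"
      unfolding y by (simp add: Bf_swap_r[of _ "Jm w0" "Jm v0"])
    then have d: "d = 0" using h D by simp
    show ?thesis unfolding y c d using e1 e2 by (simp add: vec_eq_iff algebra_simps)
  qed
  have "wedge q u \<in> pt (wedge v0 w0)" using pt_mem[of "wedge q u"] x xx by simp
  then obtain k where k: "wedge q u = k *s wedge v0 w0" unfolding pt_def by blast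
  have "k \<noteq> 0" using k ind2_wedge[OF qu] by auto
  then have w: "wedge v0 w0 = (1/k) *s wedge q u" using k by (simp add: vector_smult_assoc)
  show ?thesis
  proof
    show "S *v q = \<i> *s q" by (rule crit) (simp add: w)
    show "S *v u = \<i> *s u" by (rule crit) (simp add: w)
  qed
qed




definition cv :: "complex \<Rightarrow> complex \<Rightarrow> complex \<Rightarrow> complex \<Rightarrow> complex^4" where
  "cv a b c d = (\<chi> i. if i = 1 then a else if i = 2 then b else if i = 3 then c else d)"

definition Dg :: "complex^4^4" where
  "Dg = (\<chi> i j. if i = j then (if i = 1 \<or> i = 2 then \<i> else - \<i>) else 0)"

lemma Dg_cv: "Dg *v cv a b c d = cv (\<i>*a) (\<i>*b) (-\<i>*c) (-\<i>*d)"
  unfolding vec_eq_iff forall_4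
  by (simp add: Dg_def cv_def matrix_vector_mult_def sum_4)

lemma cols4_cv: "cols4 x1 x2 x3 x4 *v cv a b c d = a *s x1 + b *s x2 + c *s x3 + d *s x4"
  by (simp add: cols4_mult cv_def)

lemma construct:
  assumes i4: "ind4 q u (Jm q) (Jm u)"
  shows "\<exists>S. cstruct S \<and> twlift S (pt (wedge q u)) \<and> S *v q = \<i> *s q \<and> S *v u = \<i> *s u"
proof -
  let ?A = "cols4 q u (Jm q) (Jm u)"
  obtain B where BA: "B ** ?A = mat 1" and AB: "?A ** B = mat 1" using ind4_inv[OF i4] by blast
  define S where "S = ?A ** Dg ** B"
  have Smap: "S *v (a *s q + b *s u + c *s Jm q + d *s Jm u)
      = (\<i>*a) *s q + (\<i>*b) *s u + (-\<i>*c) *s Jm q + (-\<i>*d) *s Jm u" for a b c d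
  proof -
    have "S *v (a *s q + b *s u + c *s Jm q + d *s Jm u) = S *v (?A *v cv a b c d)"
      by (simp only: cols4_cv)
    also have "\<dots> = ?A *v (Dg *v ((B ** ?A) *v cv a b c d))"
      unfolding S_def by (simp only: matrix_vector_mul_assoc matrix_mul_assoc)
    also have "\<dots> = ?A *v (Dg *v cv a b c d)" by (simp only: BA matrix_vector_mul_lid)
    also have "\<dots> = (\<i>*a) *s q + (\<i>*b) *s u + (-\<i>*c) *s Jm q + (-\<i>*d) *s Jm u"
      by (simp only: Dg_cv cols4_cv)
    finally show ?thesis .
  qed
  have sp: "\<exists>a b c d. v = a *s q + b *s u + c *s Jm q + d *s Jm u" for v
    by (rule span4[OF i4])
  have SJ: "S *v Jm v = Jm (S *v v)" for v
  proof -
    obtain a b c d where v: "v = a *s q + b *s u + c *s Jm q + d *s Jm u" using sp by blast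
    have Jv: "Jm v = (- cnj c) *s q + (- cnj d) *s u + cnj a *s Jm q + cnj b *s Jm u"
      unfolding v by (simp add: vec_eq_iff algebra_simps)
    show ?thesis unfolding Jv unfolding v Smap by (simp add: vec_eq_iff algebra_simps)
  qed
  have SS: "S ** S = - mat 1"
    unfolding matrix_eq
  proof
    fix v
    obtain a b c d where v: "v = a *s q + b *s u + c *s Jm q + d *s Jm u" using sp by blast
    have "(S ** S) *v v = S *v (S *v v)" by (simp add: matrix_vector_mul_assoc)
    also have "\<dots> = - v" unfolding v Smap by (simp add: vec_eq_iff algebra_simps)
    finally show "(S ** S) *v v = (- mat 1) *v v" by (simp add: negmat_mv)
  qed
  have cs: "cstruct S" unfolding cstruct_def using SJ SS by blast
  have Sq: "S *v q = \<i> *s q" using Smap[of 1 0 0 0] by simp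
  have Su: "S *v u = \<i> *s u" using Smap[of 0 1 0 0] by simp
  have E: "{v. S *v v = \<i> *s v} = {s *s q + t *s u | s t. True}"
  proof (intro set_eqI iffI)
    fix v assume "v \<in> {v. S *v v = \<i> *s v}"
    then have h: "S *v v = \<i> *s v" by simp
    obtain a b c d where v: "v = a *s q + b *s u + c *s Jm q + d *s Jm u" using sp by blast
    have "0 *s q + 0 *s u + (-2*\<i>*c) *s Jm q + (-2*\<i>*d) *s Jm u = S *v v - \<i> *s v"
      unfolding v Smap by (simp add: vec_eq_iff algebra_simps)
    also have "\<dots> = 0" using h by simp
    finally have "-2*\<i>*c = 0 \<and> -2*\<i>*d = 0" using i4 unfolding ind4_def by blast
    then have "c = 0" "d = 0" by simp_all
    then show "v \<in> {s *s q + t *s u | s t. True}" using v by auto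
  next
    fix v assume "v \<in> {s *s q + t *s u | s t. True}"
    then obtain s t where v: "v = s *s q + t *s u" by blast
    have "S *v v = \<i> *s v" unfolding v by (simp add: Sq Su vec_eq_iff algebra_simps)
    then show "v \<in> {v. S *v v = \<i> *s v}" by simp
  qed
  have "twlift S (pt (wedge q u))"
    unfolding twlift_def subspace_pt_def
    using ind4_ind2[OF i4] E unfolding ind2_def by blast
  then show ?thesis using cs Sq Su by blast
qed




lemma projline_change:
  fixes a b :: c6
  assumes ab: "ind2 a b" and c1: "c1 = x1 *s a + y1 *s b" and c2: "c2 = x2 *s a + y2 *s b"
    and cc: "ind2 c1 c2"
  shows "projline a b = projline c1 c2"
proof -
  have D: "x1 * y2 - x2 * y1 \<noteq> 0"
  proof
    assume D0: "x1 * y2 - x2 * y1 = 0"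
    have "y2 *s c1 + (- y1) *s c2 = (x1 * y2 - x2 * y1) *s a"
      unfolding c1 c2 by (simp add: vec_eq_iff algebra_simps)
    then have "y2 *s c1 + (- y1) *s c2 = 0" using D0 by simp
    then have "y2 = 0 \<and> - y1 = 0" using cc unfolding ind2_def by blast
    then have y: "y2 = 0 \<and> y1 = 0" by simp
    have "x2 *s c1 + (- x1) *s c2 = (x2 * y1 - x1 * y2) *s b"
      unfolding c1 c2 by (simp add: vec_eq_iff algebra_simps)
    then have "x2 *s c1 + (- x1) *s c2 = 0" using D0 by (simp add: algebra_simps)
    then have "x2 = 0 \<and> - x1 = 0" using cc unfolding ind2_def by blast
    then have x: "x2 = 0 \<and> x1 = 0" by simp
    have "1 *s c1 + 0 *s c2 = 0" unfolding c1 using x y by simp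
    then have "(1::complex) = 0 \<and> (0::complex) = 0" using cc unfolding ind2_def by blast
    then show False by simp
  qed
  show ?thesis
  proof (intro set_eqI iffI)
    fix x assume "x \<in> projline a b"
    then obtain s t where st: "s \<noteq> 0 \<or> t \<noteq> 0" and x: "x = pt (s *s a + t *s b)"
      unfolding projline_def by blast
    define Dt where "Dt = x1 * y2 - x2 * y1"
    define s' where "s' = (1/Dt) * (s * y2 - t * x2)"
    define t' where "t' = (1/Dt) * (t * x1 - s * y1)"
    have e1: "(s * y2 - t * x2) *s c1 + (t * x1 - s * y1) *s c2 = Dt *s (s *s a + t *s b)"
      unfolding c1 c2 Dt_def by (simp add: vec_eq_iff algebra_simps)
    have "s' *s c1 + t' *s c2 = (1/Dt) *s ((s * y2 - t * x2) *s c1 + (t * x1 - s * y1) *s c2)"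
      unfolding s'_def t'_def by (simp only: vector_add_ldistrib vector_smult_assoc)
    also have "\<dots> = ((1/Dt) * Dt) *s (s *s a + t *s b)" unfolding e1 by (simp only: vector_smult_assoc)
    also have "\<dots> = s *s a + t *s b" using D unfolding Dt_def by simp
    finally have eq: "s' *s c1 + t' *s c2 = s *s a + t *s b" .
    have "s' \<noteq> 0 \<or> t' \<noteq> 0"
    proof (rule ccontr)
      assume "\<not> (s' \<noteq> 0 \<or> t' \<noteq> 0)"
      then have "s *s a + t *s b = 0" using eq by simp
      then show False using ab st unfolding ind2_def by blast
    qed
    then have "pt (s' *s c1 + t' *s c2) \<in> projline c1 c2"
      unfolding projline_def by blast
    then show "x \<in> projline c1 c2" using x eq by simp
  next
    fix x assume "x \<in> projline c1 c2"
    then obtain s t where st: "s \<noteq> 0 \<or> t \<noteq> 0" and x: "x = pt (s *s c1 + t *s c2)"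
      unfolding projline_def by blast
    have eq: "s *s c1 + t *s c2 = (s * x1 + t * x2) *s a + (s * y1 + t * y2) *s b"
      unfolding c1 c2 by (simp add: vec_eq_iff algebra_simps)
    have "s * x1 + t * x2 \<noteq> 0 \<or> s * y1 + t * y2 \<noteq> 0"
    proof (rule ccontr)
      assume "\<not> ?thesis"
      then have "s *s c1 + t *s c2 = 0" unfolding eq by simp
      then show False using cc st unfolding ind2_def by blast
    qed
    then have "pt ((s * x1 + t * x2) *s a + (s * y1 + t * y2) *s b) \<in> projline a b"
      unfolding projline_def by blast
    then show "x \<in> projline a b" using x eq by simp
  qed
qed

lemma Bf_self: "Bf a a = 2 * wsq a"
  by (simp add: Bf_def wsq_def algebra_simps)

lemma Pv_eq:
  assumes q: "q \<in> Pv p" and q0: "q \<noteq> 0"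
  shows "Pv q = Pv p" and "\<exists>l. l \<noteq> 0 \<and> wedge q (Jm q) = l *s wedge p (Jm p)"
proof -
  obtain al be where qd: "q = al *s p + be *s Jm p" using q unfolding Pv_def by blast
  define l where "l = cnj al * al + be * cnj be"
  have l0: "l \<noteq> 0"
  proof
    assume "l = 0"
    then have "al = 0 \<and> be = 0" unfolding l_def by (rule normsq0)
    then show False using q0 qd by simp
  qed
  have "l *s p = cnj al *s q + (- be) *s Jm q"
    unfolding qd l_def by (simp add: vec_eq_iff algebra_simps)
  then have "(1/l) *s (l *s p) = (1/l) *s (cnj al *s q + (- be) *s Jm q)" by simp
  then have "p = (cnj al / l) *s q + (- be / l) *s Jm q"
    using l0 by (simp only: vector_add_ldistrib vector_smult_assoc) simp
  then have pq: "p \<in> Pv q" unfolding Pv_def by blast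
  have sub: "Pv y \<subseteq> Pv x" if "y \<in> Pv x" for x y
  proof
    fix z assume "z \<in> Pv y"
    then obtain a b where "z = a *s y + b *s Jm y" unfolding Pv_def by blast
    then show "z \<in> Pv x" using Pv_add[OF Pv_scale[OF that] Pv_scale[OF Pv_J[OF that]]] by simp
  qed
  show "Pv q = Pv p" using sub[OF q] sub[OF pq] by blast
  have "wedge q (Jm q) = l *s wedge p (Jm p)"
    unfolding qd l_def by (simp add: wedge_swap[of "Jm p" p] vec_eq_iff algebra_simps)
  then show "\<exists>l. l \<noteq> 0 \<and> wedge q (Jm q) = l *s wedge p (Jm p)" using l0 by blast
qed




lemma wsq_zero[simp]: "wsq 0 = 0" by (simp add: wsq_def)

lemma wedge_zero_mult:
  assumes q0: "q \<noteq> 0" and w: "wedge q y = 0"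
  shows "\<exists>mu. y = mu *s q"
proof -
  obtain k where k: "q$k \<noteq> 0" using q0 by (auto simp: vec_eq_iff)
  have "(y$k) *s q - (q$k) *s y = 0" by (rule wedge0_dep[OF w])
  then have "(q$k) *s y = (y$k) *s q" by simp
  then have "(1/q$k) *s ((q$k) *s y) = (1/q$k) *s ((y$k) *s q)" by simp
  then have "y = ((1/q$k) * (y$k)) *s q" using k by (simp only: vector_smult_assoc) simp
  then show ?thesis by blast
qed

lemma nl_setup:
  assumes nl: "null_line N" and p0: "p \<noteq> 0" and pN: "pt (wedge p (Jm p)) \<in> N"
  shows "\<exists>q m. q \<noteq> 0 \<and> Pv q = Pv p \<and> m \<notin> Pv p \<and> pt (wedge q (Jm q)) = pt (wedge p (Jm p))
     \<and> N = {pt (wedge q (s *s Jm q + t *s m)) | s t. s \<noteq> 0 \<or> t \<noteq> 0}"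
proof -
  obtain a b where abi: "ind2 a b" and Nab: "N = projline a b" and NQ: "N \<subseteq> Q4"
    using nl unfolding null_line_def ind2_def by blast
  have iso: "wsq (s *s a + t *s b) = 0" for s t
  proof (cases "s = 0 \<and> t = 0")
    case True then show ?thesis by simp
  next
    case False
    then have "pt (s *s a + t *s b) \<in> N" unfolding Nab projline_def by blast
    then obtain c where c: "pt (s *s a + t *s b) = pt c" "wsq c = 0" using NQ unfolding Q4_def by blast
    obtain k where "s *s a + t *s b = k *s c" using pt_eqD[OF c(1)] by blast
    then show ?thesis using c(2) by (simp add: wsq_scale)
  qed
  have wa: "wsq a = 0" using iso[of 1 0] by simp
  have wb: "wsq b = 0" using iso[of 0 1] by simp
  have wab: "Bf a b = 0" using iso[of 1 1] wa wb by (simp add: wsq_add)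
  have Bz: "Bf (u *s a + w *s b) (x *s a + y *s b) = 0" for u w x y
    by (simp add: Bf_self wa wb wab Bf_sym[of b a])
  define a0 where "a0 = wedge p (Jm p)"
  have a00: "a0 \<noteq> 0" unfolding a0_def by (rule ind2_wedge[OF ind2_J[OF p0]])
  obtain s0 t0 where st0: "s0 \<noteq> 0 \<or> t0 \<noteq> 0" and pa: "pt a0 = pt (s0 *s a + t0 *s b)"
    using pN unfolding Nab projline_def a0_def by blast
  obtain k where ka: "a0 = k *s (s0 *s a + t0 *s b)" using pt_eqD[OF pa] by blast
  have k0: "k \<noteq> 0" using ka a00 by auto
  have a0e: "a0 = (k* s0) *s a + (k*t0) *s b" using ka by (simp add: vec_eq_iff algebra_simps)
  obtain b' x y where b'e: "b' = x *s a + y *s b" and ib: "ind2 a0 b'"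
  proof (cases "t0 = 0")
    case True
    then have s00: "s0 \<noteq> 0" using st0 by simp
    have "ind2 a0 b" unfolding ind2_def
    proof (intro allI impI)
      fix s t assume "s *s a0 + t *s b = 0"
      then have "(s*k* s0) *s a + t *s b = 0" using a0e True by (simp add: vec_eq_iff algebra_simps)
      then have "s*k* s0 = 0 \<and> t = 0" using abi unfolding ind2_def by blast
      then show "s = 0 \<and> t = 0" using k0 s00 by simp
    qed
    then show ?thesis using that[of b 0 1] by simp
  next
    case False
    have "ind2 a0 a" unfolding ind2_def
    proof (intro allI impI)
      fix s t assume "s *s a0 + t *s a = 0"
      then have "(s*k* s0 + t) *s a + (s*k*t0) *s b = 0" using a0e by (simp add: vec_eq_iff algebra_simps)
      then have "s*k* s0 + t = 0 \<and> s*k*t0 = 0" using abi unfolding ind2_def by blast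
      then show "s = 0 \<and> t = 0" using k0 False by auto
    qed
    then show ?thesis using that[of a 1 0] by simp
  qed
  have b'0: "b' \<noteq> 0"
  proof
    assume "b' = 0"
    then have "0 *s a0 + 1 *s b' = 0" by simp
    then have "(0::complex) = 0 \<and> (1::complex) = 0" using ib unfolding ind2_def by blast
    then show False by simp
  qed
  have wb': "wsq b' = 0" using iso b'e by simp
  have Bab: "Bf a0 b' = 0" using Bz a0e b'e by simp
  obtain v w where vw: "wedge v w = b'" using decomp[OF b'0 wb'] by blast
  have ivw: "ind2 v w" using wedge_ind2 b'0 vw by simp
  have "\<not> ind4 p (Jm p) v w" using G[of p "Jm p" v w] Bab vw unfolding a0_def by blast
  then obtain al be ga de where lin: "al *s p + be *s Jm p + ga *s v + de *s w = 0"
      and nz: "\<not> (al = 0 \<and> be = 0 \<and> ga = 0 \<and> de = 0)" unfolding ind4_def by blast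
  have gd: "ga \<noteq> 0 \<or> de \<noteq> 0"
  proof (rule ccontr)
    assume "\<not> (ga \<noteq> 0 \<or> de \<noteq> 0)"
    then have "al *s p + be *s Jm p = 0" using lin by simp
    then show False using ind2_J[OF p0] nz \<open>\<not> (ga \<noteq> 0 \<or> de \<noteq> 0)\<close> unfolding ind2_def by blast
  qed
  define q where "q = ga *s v + de *s w"
  have qp: "q = (- al) *s p + (- be) *s Jm p"
    using lin unfolding q_def by (simp add: vec_eq_iff algebra_simps) (metis add.commute add.left_commute add_eq_0_iff2)
  have qP: "q \<in> Pv p" unfolding qp by (rule Pv_gen)
  have q0: "q \<noteq> 0" using ivw gd unfolding q_def ind2_def by blast
  obtain m ka where mk: "wedge q m = ka *s b'" and ka0: "ka \<noteq> 0"
  proof (cases "ga = 0")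
    case True
    then have "wedge q v = (- de) *s b'" unfolding q_def vw[symmetric]
      by (simp add: wedge_swap[of w v])
    moreover have "- de \<noteq> 0" using True gd by simp
    ultimately show ?thesis using that by blast
  next
    case False
    then have "wedge q w = ga *s b'" unfolding q_def vw[symmetric] by simp
    then show ?thesis using that False by simp
  qed
  have mP: "m \<notin> Pv p"
  proof
    assume "m \<in> Pv p"
    then obtain xx yy where m: "m = xx *s p + yy *s Jm p" unfolding Pv_def by blast
    have "wedge q m = ((- al) * yy - (- be) * xx) *s a0"
      unfolding qp m a0_def by (simp add: wedge_swap[of "Jm p" p] vec_eq_iff algebra_simps)
    then have "((- al) * yy - (- be) * xx) *s a0 + (- ka) *s b' = 0" using mk by simp
    then have "- ka = 0" using ib unfolding ind2_def by blast
    then show False using ka0 by simp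
  qed
  obtain l where l0: "l \<noteq> 0" and lw: "wedge q (Jm q) = l *s a0" using Pv_eq(2)[OF qP q0] unfolding a0_def by blast
  have Pq: "Pv q = Pv p" using Pv_eq(1)[OF qP q0] .
  have ptq: "pt (wedge q (Jm q)) = pt a0" using lw l0 pt_scale by simp
  have i4: "ind4 q (Jm q) m (Jm m)" using ind4_J[OF q0] mP Pq by simp
  have cc: "ind2 (wedge q (Jm q)) (wedge q m)" unfolding ind2_def
  proof (intro allI impI)
    fix s t assume "s *s wedge q (Jm q) + t *s wedge q m = 0"
    then have "wedge q (s *s Jm q + t *s m) = 0" by simp
    then obtain mu where "s *s Jm q + t *s m = mu *s q" using wedge_zero_mult[OF q0] by blast
    then have "(- mu) *s q + s *s Jm q + t *s m + 0 *s Jm m = 0" by (simp add: vec_eq_iff algebra_simps)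
    then show "s = 0 \<and> t = 0" using i4 unfolding ind4_def by blast
  qed
  have c1: "wedge q (Jm q) = (l*k* s0) *s a + (l*k*t0) *s b" using lw a0e by (simp add: vec_eq_iff algebra_simps)
  have c2: "wedge q m = (ka*x) *s a + (ka*y) *s b" using mk b'e by (simp add: vec_eq_iff algebra_simps)
  have "N = projline (wedge q (Jm q)) (wedge q m)"
    unfolding Nab by (rule projline_change[OF abi c1 c2 cc])
  also have "\<dots> = {pt (wedge q (s *s Jm q + t *s m)) | s t. s \<noteq> 0 \<or> t \<noteq> 0}"
    unfolding projline_def by simp
  finally have "N = {pt (wedge q (s *s Jm q + t *s m)) | s t. s \<noteq> 0 \<or> t \<noteq> 0}" .
  then show ?thesis using q0 Pq mP ptq unfolding a0_def by blast
qed




lemma ind2_qu: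
  assumes i4: "ind4 q (Jm q) m (Jm m)" and st: "s \<noteq> 0 \<or> t \<noteq> 0"
  shows "ind2 q (s *s Jm q + t *s m)"
  unfolding ind2_def
proof (intro allI impI)
  fix c1 c2 assume "c1 *s q + c2 *s (s *s Jm q + t *s m) = 0"
  then have "c1 *s q + (c2 * s) *s Jm q + (c2 * t) *s m + 0 *s Jm m = 0"
    by (simp add: vec_eq_iff algebra_simps)
  then have "c1 = 0 \<and> c2 * s = 0 \<and> c2 * t = 0" using i4 unfolding ind4_def by blast
  then show "c1 = 0 \<and> c2 = 0" using st by auto
qed

lemma ind4_qu:
  assumes i4: "ind4 q (Jm q) m (Jm m)" and t: "t \<noteq> 0"
  shows "ind4 q (s *s Jm q + t *s m) (Jm q) (Jm (s *s Jm q + t *s m))"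
  unfolding ind4_def
proof (intro allI impI)
  fix a b c d assume "a *s q + b *s (s *s Jm q + t *s m) + c *s Jm q + d *s Jm (s *s Jm q + t *s m) = 0"
  then have "(a - d * cnj s) *s q + (b * s + c) *s Jm q + (b * t) *s m + (d * cnj t) *s Jm m = 0"
    by (simp add: vec_eq_iff algebra_simps)
  then have h: "a - d * cnj s = 0 \<and> b * s + c = 0 \<and> b * t = 0 \<and> d * cnj t = 0"
    using i4 unfolding ind4_def by blast
  then have "b = 0" "d = 0" using t by auto
  then show "a = 0 \<and> b = 0 \<and> c = 0 \<and> d = 0" using h by simp
qed

lemma jpt_real:
  "jpt (pt (wedge q (Jm q))) = pt (wedge q (Jm q))"
proof -
  have jl: "jL (k *s c) = cnj k *s jL c" for k c
    by (simp add: jL_def vec_eq_iff)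
  have "jL (wedge q (Jm q)) = wedge q (Jm q)"
    by (simp add: jL_wedge wedge_swap[of "Jm q" q])
  then have "jL ` range (\<lambda>k. k *s wedge q (Jm q)) = range (\<lambda>k. cnj k *s wedge q (Jm q))"
    by (simp add: image_image jl)
  also have "\<dots> = range (\<lambda>k. k *s wedge q (Jm q))"
  proof (intro set_eqI iffI)
    fix z assume "z \<in> range (\<lambda>k. cnj k *s wedge q (Jm q))"
    then obtain k where "z = cnj k *s wedge q (Jm q)" by blast
    then show "z \<in> range (\<lambda>k. k *s wedge q (Jm q))" by blast
  next
    fix z assume "z \<in> range (\<lambda>k. k *s wedge q (Jm q))"
    then obtain k where "z = k *s wedge q (Jm q)" by blast
    then have "z = cnj (cnj k) *s wedge q (Jm q)" by simp
    then show "z \<in> range (\<lambda>k. cnj k *s wedge q (Jm q))" by blast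
  qed
  finally show ?thesis unfolding jpt_def pt_def .
qed

lemma eig_t:
  assumes S: "cstruct S" and i4: "ind4 q (Jm q) m (Jm m)" and st: "s \<noteq> 0 \<or> t \<noteq> 0"
    and tw: "twlift S (pt (wedge q (s *s Jm q + t *s m)))"
  shows "t \<noteq> 0 \<and> S *v q = \<i> *s q \<and> S *v (s *s Jm q + t *s m) = \<i> *s (s *s Jm q + t *s m)"
proof -
  have e: "S *v q = \<i> *s q \<and> S *v (s *s Jm q + t *s m) = \<i> *s (s *s Jm q + t *s m)"
    by (rule key_eig[OF S tw refl ind2_qu[OF i4 st]])
  have "t \<noteq> 0"
  proof
    assume t0: "t = 0"
    then have s0: "s \<noteq> 0" using st by simp
    have q0: "Jm q \<noteq> 0"
    proof
      assume "Jm q = 0"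
      then have "0 *s q + 1 *s Jm q + 0 *s m + 0 *s Jm m = 0" by simp
      then have "(1::complex) = 0" using i4 unfolding ind4_def by blast
      then show False by simp
    qed
    have SJ: "S *v Jm q = (-\<i>) *s Jm q" using eig_J[OF S] e by blast
    have u: "s *s Jm q + t *s m = s *s Jm q" using t0 by simp
    have a: "S *v (s *s Jm q) = \<i> *s (s *s Jm q)" using e unfolding u by blast
    have b: "S *v (s *s Jm q) = (-\<i> * s) *s Jm q" by (simp add: SJ vec_eq_iff algebra_simps)
    have "(2 * \<i> * s) *s Jm q = \<i> *s (s *s Jm q) - (-\<i> * s) *s Jm q" by (simp add: vec_eq_iff algebra_simps)
    also have "\<dots> = 0" using a b by simp
    finally have "(2 * \<i> * s) *s Jm q = 0" .
    moreover have "2 * \<i> * s \<noteq> 0" using s0 by simp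
    ultimately show False using q0 vector_mul_eq_0 by blast
  qed
  then show ?thesis using e by blast
qed




lemma S_Pv:
  assumes S: "cstruct S" and Sq: "S *v q = \<i> *s q"
  shows "S *v (a *s q + b *s Jm q) = (\<i> * a) *s q + (- \<i> * b) *s Jm q"
  using eig_J[OF S Sq] Sq by (simp add: vec_eq_iff algebra_simps)

lemma S_Pv_mem:
  assumes S: "cstruct S" and Sq: "S *v q = \<i> *s q" and v: "v \<in> Pv q"
  shows "S *v v \<in> Pv q"
proof -
  obtain a b where vd: "v = a *s q + b *s Jm q" using v unfolding Pv_def by blast
  show ?thesis unfolding vd S_Pv[OF S Sq] by (rule Pv_gen(3))
qed

lemma S_Pv_onto:
  assumes S: "cstruct S" and Sq: "S *v q = \<i> *s q"
  shows "(\<lambda>v. S *v v) ` Pv q = Pv q"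
proof (intro set_eqI iffI)
  fix v assume "v \<in> (\<lambda>v. S *v v) ` Pv q"
  then show "v \<in> Pv q" using S_Pv_mem[OF S Sq] by blast
next
  fix v assume v: "v \<in> Pv q"
  have "- (S *v v) \<in> Pv q" using Pv_scale[OF S_Pv_mem[OF S Sq v], of "-1"] by (simp add: vector_smult_lneg)
  moreover have "S *v (- (S *v v)) = v" using cs_SS[OF S] by simp
  ultimately show "v \<in> (\<lambda>v. S *v v) ` Pv q" by (metis image_eqI)
qed

lemma Sm_lem:
  assumes S: "cstruct S" and Sq: "S *v q = \<i> *s q"
    and Su: "S *v (s *s Jm q + t *s m) = \<i> *s (s *s Jm q + t *s m)" and t: "t \<noteq> 0"
  shows "S *v m - \<i> *s m \<in> Pv q"
proof -
  have SJ: "S *v Jm q = (-\<i>) *s Jm q" using eig_J[OF S Sq] by simp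
  have h: "s *s (S *v Jm q) + t *s (S *v m) = \<i> *s (s *s Jm q + t *s m)" using Su by simp
  have h': "s *s ((-\<i>) *s Jm q) + t *s (S *v m) = \<i> *s (s *s Jm q + t *s m)" using h unfolding SJ .
  have "t *s (S *v m - \<i> *s m) = (s *s ((-\<i>) *s Jm q) + t *s (S *v m)) - s *s ((-\<i>) *s Jm q) - (\<i> * t) *s m"
    by (simp add: vec_eq_iff algebra_simps)
  also have "\<dots> = \<i> *s (s *s Jm q + t *s m) - s *s ((-\<i>) *s Jm q) - (\<i> * t) *s m"
    unfolding h' ..
  also have "\<dots> = (2 * \<i> * s) *s Jm q" by (simp add: vec_eq_iff algebra_simps)
  finally have e: "t *s (S *v m - \<i> *s m) = (2 * \<i> * s) *s Jm q" .
  have "S *v m - \<i> *s m = (1/t) *s (t *s (S *v m - \<i> *s m))"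
    using t by (simp only: vector_smult_assoc) simp
  also have "\<dots> = (1/t) *s ((2 * \<i> * s) *s Jm q)" unfolding e ..
  finally show ?thesis using Pv_scale[OF Pv_scale[OF Pv_gen(2)]] by metis
qed

lemma hbasis_lem:
  assumes "ind4 p (Jm p) m (Jm m)"
  shows "hbasis p m"
  unfolding hbasis_def
proof (intro allI impI)
  fix q1 q2 :: quat assume "rmul p q1 + rmul m q2 = 0"
  then have "fst q1 *s p + snd q1 *s Jm p + fst q2 *s m + snd q2 *s Jm m = 0"
    unfolding rmul_def by (simp add: add.assoc)
  then have "fst q1 = 0 \<and> snd q1 = 0 \<and> fst q2 = 0 \<and> snd q2 = 0" using assms unfolding ind4_def by blast
  then show "q1 = 0 \<and> q2 = 0" by (simp add: prod_eq_iff)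
qed

lemma touch_lem:
  assumes p0: "p \<noteq> 0" and Pq: "Pv q = Pv p" and mP: "m \<notin> Pv p"
    and S: "cstruct S" and S': "cstruct S'" and Sq: "S *v q = \<i> *s q" and S'q: "S' *v q = \<i> *s q"
    and Su: "S *v (s1 *s Jm q + t1 *s m) = \<i> *s (s1 *s Jm q + t1 *s m)" and t1: "t1 \<noteq> 0"
    and S'u: "S' *v (s2 *s Jm q + t2 *s m) = \<i> *s (s2 *s Jm q + t2 *s m)" and t2: "t2 \<noteq> 0"
  shows "touch S S' p"
proof -
  have "p \<in> Pv q" using Pq Pv_gen(1)[of p] by simp
  then obtain a b where pd: "p = a *s q + b *s Jm q" unfolding Pv_def by blast
  have agree: "S' *v p = S *v p" unfolding pd S_Pv[OF S Sq] S_Pv[OF S' S'q] ..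
  have "S *v p \<in> Pv p" using S_Pv_mem[OF S Sq \<open>p \<in> Pv q\<close>] Pq by simp
  then obtain R where R: "S *v p = rmul p R" unfolding hline_Pv[symmetric] hline_def by blast
  have "S *v m - \<i> *s m \<in> Pv p" using Sm_lem[OF S Sq Su t1] Pq by simp
  then obtain H where H: "S *v m - \<i> *s m = rmul p H" unfolding hline_Pv[symmetric] hline_def by blast
  have "S' *v m - \<i> *s m \<in> Pv p" using Sm_lem[OF S' S'q S'u t2] Pq by simp
  then obtain H' where H': "S' *v m - \<i> *s m = rmul p H'" unfolding hline_Pv[symmetric] hline_def by blast
  have rm: "rmul m (\<i>, 0) = \<i> *s m" unfolding rmul_def by simp
  have "hbasis p m" by (rule hbasis_lem[OF ind4_J[OF p0 mP]])
  moreover have "S *v m = rmul p H + rmul m (\<i>, 0)" using H rm by (simp add: algebra_simps)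
  moreover have "S' *v m = rmul p H' + rmul m (\<i>, 0)" using H' rm by (simp add: algebra_simps)
  ultimately show ?thesis unfolding touch_def using R agree by metis
qed




lemma rmul_Pv: "rmul p h \<in> Pv p"
  unfolding hline_Pv[symmetric] hline_def by blast

lemma touch_back:
  assumes Pq: "Pv q = Pv p" and i4: "ind4 q (Jm q) m (Jm m)"
    and S: "cstruct S" and S': "cstruct S'" and Sq: "S *v q = \<i> *s q"
    and Su: "S *v (s *s Jm q + t *s m) = \<i> *s (s *s Jm q + t *s m)" and t: "t \<noteq> 0"
    and tch: "touch S S' p" and tw: "twlift S' x"
  shows "\<exists>s' t'. (s' \<noteq> 0 \<or> t' \<noteq> 0) \<and> x = pt (wedge q (s' *s Jm q + t' *s m))"
proof -
  define u where "u = s *s Jm q + t *s m"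
  obtain e2 R H H' Nn where hb: "hbasis p e2" and Sp: "S *v p = rmul p R"
      and Se: "S *v e2 = rmul p H + rmul e2 Nn" and S'p: "S' *v p = rmul p R"
      and S'e: "S' *v e2 = rmul p H' + rmul e2 Nn"
    using tch unfolding touch_def by blast
  have agree: "S' *v p = S *v p" using Sp S'p by simp
  have agreePv: "S' *v v = S *v v" if vP: "v \<in> Pv p" for v
  proof -
    obtain a b where vd: "v = a *s p + b *s Jm p" using vP unfolding Pv_def by blast
    show ?thesis unfolding vd by (simp add: cs_J[OF S] cs_J[OF S'] agree)
  qed
  have "q \<in> Pv p" using Pq Pv_gen(1)[of q] by simp
  then have S'q: "S' *v q = \<i> *s q" using agreePv Sq by simp
  have S'Jq: "S' *v Jm q = (-\<i>) *s Jm q" using eig_J[OF S' S'q] by simp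
  have De: "S' *v e2 - S *v e2 \<in> Pv p"
  proof -
    have "S' *v e2 - S *v e2 = rmul p H' + (-1) *s rmul p H" using Se S'e
      by (simp add: vec_eq_iff algebra_simps)
    then show ?thesis using Pv_add[OF rmul_Pv Pv_scale[OF rmul_Pv]] by metis
  qed
  have i4p: "ind4 p (Jm p) e2 (Jm e2)" unfolding ind4_def
  proof (intro allI impI)
    fix a b c d assume "a *s p + b *s Jm p + c *s e2 + d *s Jm e2 = 0"
    then have "rmul p (a, b) + rmul e2 (c, d) = 0" unfolding rmul_def by (simp add: add.assoc)
    then have "(a, b) = 0 \<and> (c, d) = (0::quat)" using hb unfolding hbasis_def by blast
    then show "a = 0 \<and> b = 0 \<and> c = 0 \<and> d = 0" by (simp add: zero_prod_def)
  qed
  have DPv: "S' *v v - S *v v \<in> Pv p" for v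
  proof -
    obtain a b c d where vd: "v = a *s p + b *s Jm p + c *s e2 + d *s Jm e2" using span4[OF i4p] by blast
    have "S' *v v - S *v v = c *s (S' *v e2 - S *v e2) + d *s Jm (S' *v e2 - S *v e2)"
      unfolding vd by (simp add: cs_J[OF S] cs_J[OF S'] agree vec_eq_iff algebra_simps)
    then show ?thesis using Pv_add[OF Pv_scale[OF De] Pv_scale[OF Pv_J[OF De]]] by metis
  qed
  have "S' *v u - S *v u \<in> Pv q" using DPv[of u] Pq by simp
  then obtain al be where Du: "S' *v u - S *v u = al *s q + be *s Jm q" unfolding Pv_def by blast
  have S'u: "S' *v u = \<i> *s u + al *s q + be *s Jm q" using Du Su unfolding u_def
    by (simp add: vec_eq_iff algebra_simps)
  have "S' *v (S' *v u) = \<i> *s (\<i> *s u + al *s q + be *s Jm q) + al *s (\<i> *s q) + be *s ((-\<i>) *s Jm q)"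
    unfolding S'u by (simp add: S'u S'q S'Jq)
  moreover have "S' *v (S' *v u) = - u" by (rule cs_SS[OF S'])
  ultimately have "(2 * \<i> * al) *s q = S' *v (S' *v u) + u" by (simp add: vec_eq_iff algebra_simps)
  also have "\<dots> = 0" using cs_SS[OF S'] by simp
  finally have "(2 * \<i> * al) *s q = 0" .
  moreover have q0: "q \<noteq> 0"
  proof
    assume "q = 0"
    then have "1 *s q + 0 *s Jm q + 0 *s m + 0 *s Jm m = 0" by simp
    then have "(1::complex) = 0" using i4 unfolding ind4_def by blast
    then show False by simp
  qed
  ultimately have "2 * \<i> * al = 0" using vector_mul_eq_0 by blast
  then have al0: "al = 0" by simp
  define c0 where "c0 = - \<i> * be / 2"
  define u' where "u' = (s + c0) *s Jm q + t *s m"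
  have u'u: "u' = u + c0 *s Jm q" unfolding u'_def u_def by (simp add: vec_eq_iff algebra_simps)
  have S'u': "S' *v u' = \<i> *s u'"
    unfolding u'u using S'u al0 S'Jq
    by (simp add: c0_def vec_eq_iff algebra_simps)
  obtain v0 w0 where E: "{v. S' *v v = \<i> *s v} = {s *s v0 + t *s w0 | s t. True}"
      and xx: "x = pt (wedge v0 w0)"
    using tw unfolding twlift_def subspace_pt_def by blast
  obtain a1 b1 where qd: "q = a1 *s v0 + b1 *s w0" using E S'q by blast
  obtain a2 b2 where ud: "u' = a2 *s v0 + b2 *s w0" using E S'u' by blast
  have wq: "wedge q u' = (a1 * b2 - b1 * a2) *s wedge v0 w0"
    unfolding qd ud by (simp add: wedge_swap[of w0 v0] vec_eq_iff algebra_simps)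
  moreover have "wedge q u' \<noteq> 0" unfolding u'_def by (rule ind2_wedge[OF ind2_qu[OF i4]]) (simp add: t)
  ultimately have "a1 * b2 - b1 * a2 \<noteq> 0" by auto
  then have "pt (wedge q u') = pt (wedge v0 w0)" unfolding wq by (rule pt_scale)
  then show ?thesis using xx t unfolding u'_def by blast
qed




theorem mainTheorem10:
  fixes N :: "c6 set set" and p :: c4
  assumes "null_line N" and "p \<noteq> 0" and "pt (wedge p (Jm p)) \<in> N"
  shows "(\<forall>x\<in>N. jpt x \<noteq> x \<longrightarrow>
            (\<exists>S. cstruct S \<and> twlift S x) \<and>
            (\<forall>S. cstruct S \<and> twlift S x \<longrightarrow> on_sphere S p))
       \<and> (\<forall>S S' x x'. cstruct S \<and> twlift S x \<and> x \<in> N \<and>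
            cstruct S' \<and> twlift S' x' \<and> x' \<in> N \<longrightarrow> touch S S' p)
       \<and> (\<forall>S y. cstruct S \<and> twlift S y \<and> y \<in> N \<longrightarrow>
            {x. \<exists>S'. cstruct S' \<and> twlift S' x \<and> touch S S' p} \<union> {pt (wedge p (Jm p))} = N)"
proof -
  note nl = assms(1) and p0 = assms(2) and pN = assms(3)
  obtain q m where q0: "q \<noteq> 0" and Pq: "Pv q = Pv p" and mP: "m \<notin> Pv p"
      and ptq: "pt (wedge q (Jm q)) = pt (wedge p (Jm p))"
      and Nq: "N = {pt (wedge q (s *s Jm q + t *s m)) | s t. s \<noteq> 0 \<or> t \<noteq> 0}"
    using nl_setup[OF nl p0 pN] by blast
  have i4: "ind4 q (Jm q) m (Jm m)" using ind4_J[OF q0] mP Pq by simp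
  have memN: "x \<in> N \<longleftrightarrow> (\<exists>s t. (s \<noteq> 0 \<or> t \<noteq> 0) \<and> x = pt (wedge q (s *s Jm q + t *s m)))" for x
    unfolding Nq by blast
  have realpt: "pt (wedge q (s *s Jm q + 0 *s m)) = pt (wedge p (Jm p))" if s0: "s \<noteq> 0" for s
  proof -
    have "pt (wedge q (s *s Jm q + 0 *s m)) = pt (s *s wedge q (Jm q))" by simp
    also have "\<dots> = pt (wedge q (Jm q))" using pt_scale[OF s0] .
    finally show ?thesis using ptq by simp
  qed
  have onsph: "on_sphere S p" if S: "cstruct S" and Sq: "S *v q = \<i> *s q" for S
    unfolding on_sphere_def hline_Pv Pq[symmetric] by (rule S_Pv_onto[OF S Sq])
  have C1: "\<forall>x\<in>N. jpt x \<noteq> x \<longrightarrow>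
            (\<exists>S. cstruct S \<and> twlift S x) \<and>
            (\<forall>S. cstruct S \<and> twlift S x \<longrightarrow> on_sphere S p)"
  proof (intro ballI impI conjI allI)
    fix x assume xN: "x \<in> N" and nr: "jpt x \<noteq> x"
    obtain s t where st: "s \<noteq> 0 \<or> t \<noteq> 0" and x: "x = pt (wedge q (s *s Jm q + t *s m))"
      using xN memN by blast
    have t: "t \<noteq> 0"
    proof
      assume t0: "t = 0"
      then have "x = pt (wedge q (Jm q))" using x realpt[of s] st ptq by simp
      then show False using nr jpt_real by simp
    qed
    show "\<exists>S. cstruct S \<and> twlift S x"
      using construct[OF ind4_qu[OF i4 t, of s]] x by blast
    fix S assume "cstruct S \<and> twlift S x"
    then have S: "cstruct S" and tw: "twlift S x" by auto
    have "S *v q = \<i> *s q" using eig_t[OF S i4 st] tw x by blast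
    then show "on_sphere S p" using onsph S by blast
  qed
  have C2: "\<forall>S S' x x'. cstruct S \<and> twlift S x \<and> x \<in> N \<and>
            cstruct S' \<and> twlift S' x' \<and> x' \<in> N \<longrightarrow> touch S S' p"
  proof (intro allI impI)
    fix S S' x x' assume h: "cstruct S \<and> twlift S x \<and> x \<in> N \<and> cstruct S' \<and> twlift S' x' \<and> x' \<in> N"
    then have S: "cstruct S" and S': "cstruct S'" by auto
    obtain s t where st: "s \<noteq> 0 \<or> t \<noteq> 0" and x: "x = pt (wedge q (s *s Jm q + t *s m))"
      using h memN by blast
    obtain s' t' where st': "s' \<noteq> 0 \<or> t' \<noteq> 0" and x': "x' = pt (wedge q (s' *s Jm q + t' *s m))"
      using h memN by blast
    have e: "t \<noteq> 0 \<and> S *v q = \<i> *s q \<and> S *v (s *s Jm q + t *s m) = \<i> *s (s *s Jm q + t *s m)"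
      using eig_t[OF S i4 st] h x by blast
    have e': "t' \<noteq> 0 \<and> S' *v q = \<i> *s q \<and> S' *v (s' *s Jm q + t' *s m) = \<i> *s (s' *s Jm q + t' *s m)"
      using eig_t[OF S' i4 st'] h x' by blast
    show "touch S S' p" using touch_lem[OF p0 Pq mP S S'] e e' by blast
  qed
  have C3: "\<forall>S y. cstruct S \<and> twlift S y \<and> y \<in> N \<longrightarrow>
            {x. \<exists>S'. cstruct S' \<and> twlift S' x \<and> touch S S' p} \<union> {pt (wedge p (Jm p))} = N"
  proof (intro allI impI)
    fix S y assume h: "cstruct S \<and> twlift S y \<and> y \<in> N"
    then have S: "cstruct S" by auto
    obtain s t where st: "s \<noteq> 0 \<or> t \<noteq> 0" and y: "y = pt (wedge q (s *s Jm q + t *s m))"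
      using h memN by blast
    have e: "t \<noteq> 0 \<and> S *v q = \<i> *s q \<and> S *v (s *s Jm q + t *s m) = \<i> *s (s *s Jm q + t *s m)"
      using eig_t[OF S i4 st] h y by blast
    show "{x. \<exists>S'. cstruct S' \<and> twlift S' x \<and> touch S S' p} \<union> {pt (wedge p (Jm p))} = N"
    proof (intro set_eqI iffI)
      fix x assume "x \<in> {x. \<exists>S'. cstruct S' \<and> twlift S' x \<and> touch S S' p} \<union> {pt (wedge p (Jm p))}"
      then consider "x = pt (wedge p (Jm p))" | S' where "cstruct S'" "twlift S' x" "touch S S' p" by blast
      then show "x \<in> N"
      proof cases
        case 1 then show ?thesis using pN by simp
      next
        case 2
        have "\<exists>s' t'. (s' \<noteq> 0 \<or> t' \<noteq> 0) \<and> x = pt (wedge q (s' *s Jm q + t' *s m))"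
          using touch_back[OF Pq i4 S 2(1)] e 2(2,3) by blast
        then show ?thesis using memN by blast
      qed
    next
      fix x assume "x \<in> N"
      then obtain s' t' where st': "s' \<noteq> 0 \<or> t' \<noteq> 0" and x: "x = pt (wedge q (s' *s Jm q + t' *s m))"
        using memN by blast
      show "x \<in> {x. \<exists>S'. cstruct S' \<and> twlift S' x \<and> touch S S' p} \<union> {pt (wedge p (Jm p))}"
      proof (cases "t' = 0")
        case True
        then have "x = pt (wedge p (Jm p))" using x realpt[of s'] st' by simp
        then show ?thesis by simp
      next
        case False
        obtain S' where S': "cstruct S'" and tw: "twlift S' x" and S'q: "S' *v q = \<i> *s q"
            and S'u: "S' *v (s' *s Jm q + t' *s m) = \<i> *s (s' *s Jm q + t' *s m)"
          using construct[OF ind4_qu[OF i4 False, of s']] x by blast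
        have "touch S S' p" using touch_lem[OF p0 Pq mP S S'] e S'q S'u False by blast
        then show ?thesis using S' tw by blast
      qed
    qed
  qed
  show ?thesis using C1 C2 C3 by blast
qed


end
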